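(* Let $B$ be a finite Blaschke product of degree $2$. If $M(B)\le 3$ then $m(B)\ge1$, and if $M(B)<3$ then $m(B)>1$. Equivalently: if the restriction of $z\mapsto z^3/B(z)$ to $\mathbb T$ is a homeomorphism of $\mathbb T$, then so is the restriction of $z\mapsto B(z)/z$; and if $z^3/B(z)$ is a diffeomorphism of $\mathbb T$, then so is $B(z)/z$.
   Context: A finite Blaschke product of degree $n$ is $B(z)=\alpha\prod_{k=1}^n \frac{z-a_k}{1-\overline{a_k}z}$ with $a_k\in\mathbb D=\{|z|<1\}$, $\alpha\in\mathbb T=\{|z|=1\}$; $M(B)=\sup_{|z|=1}|B'(z)|$, $m(B)=\inf_{|z|=1}|B'(z)|$. For a Blaschke product of degree $n$ it is known that $B(z)/z^{n-1}$ is a homeomorphism (resp. diffeomorphism) of $\mathbb T$ iff $m(B)\ge n-1$ (resp. $>n-1$), and $z^{n+1}/B(z)$ is a homeomorphism (resp. diffeomorphism) of $\mathbb T$ iff $M(B)\le n+1$ (resp. $<n+1$). *)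

theory Defs
  imports "HOL-Analysis.Analysis"
begin

definition blaschke :: "complex \<Rightarrow> complex list \<Rightarrow> complex \<Rightarrow> complex" where
  "blaschke alpha as z = alpha * prod_list (map (\<lambda>a. (z - a) / (1 - cnj a * z)) as)"

definition is_blaschke :: "nat \<Rightarrow> (complex \<Rightarrow> complex) \<Rightarrow> bool" where
  "is_blaschke n B \<longleftrightarrow> (\<exists>alpha as. cmod alpha = 1 \<and> length as = n \<and>
      (\<forall>a\<in>set as. cmod a < 1) \<and> B = blaschke alpha as)"

definition Mder :: "(complex \<Rightarrow> complex) \<Rightarrow> real" where
  "Mder B = (SUP z\<in>sphere 0 1. cmod (deriv B z))"

definition mder :: "(complex \<Rightarrow> complex) \<Rightarrow> real" where
  "mder B = (INF z\<in>sphere 0 1. cmod (deriv B z))"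

end

theory Submission
  imports Defs "HOL-Complex_Analysis.Complex_Analysis"
begin


definition PK :: "complex \<Rightarrow> complex \<Rightarrow> real" where
  "PK a z = (1 - (cmod a)^2) / (cmod (z - a))^2"

lemma cmod_sq: "(cmod x)^2 = (Re x)^2 + (Im x)^2"
  by (simp add: cmod_power2)

lemma re_frac:
  assumes z: "cmod z = 1" and za: "z \<noteq> a"
  shows "Re (z / (z - a)) = (1 + PK a z) / 2"
proof -
  have z2: "(Re z)^2 + (Im z)^2 = 1" using z cmod_sq[of z] by simp
  have d: "(Re z - Re a)^2 + (Im z - Im a)^2 \<noteq> 0"
    using za by (metis complex_eq_iff diff_self eq_iff_diff_eq_0 sum_power2_eq_zero_iff)
  show ?thesis
    unfolding PK_def cmod_sq Re_divide using d z2
    by (simp add: field_simps power2_eq_square)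
qed

lemma re_herg:
  assumes z: "cmod z = 1" and za: "z \<noteq> a"
  shows "Re ((z + a) / (z - a)) = PK a z"
proof -
  have "(z + a) / (z - a) = 2 * (z / (z - a)) - 1" using za by (simp add: field_simps)
  then have "Re ((z + a) / (z - a)) = 2 * Re (z / (z - a)) - 1"
    by (simp del: times_divide_eq_right)
  then show ?thesis using re_frac[OF assms] by (simp add: field_simps)
qed

lemma re_xfrac:
  assumes "cmod x \<le> 1" "x \<noteq> 1"
  shows "Re (x / (1 - x)) \<ge> -1/2"
proof -
  have x2: "(Re x)^2 + (Im x)^2 \<le> 1" using assms(1) cmod_sq[of x]
    by (metis abs_norm_cancel power_le_one real_sqrt_abs real_sqrt_le_1_iff cmod_def abs_of_nonneg norm_ge_zero)
  have d: "(1 - Re x)^2 + (Im x)^2 > 0"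
    using assms(2) by (smt (verit) complex_eq_iff one_complex.simps sum_power2_gt_zero_iff)
  show ?thesis unfolding Re_divide using d x2
    by (simp add: field_simps power2_eq_square)
qed

lemma re_xfrac_strict:
  assumes "cmod x < 1"
  shows "Re (x / (1 - x)) > -1/2"
proof -
  have x2: "(Re x)^2 + (Im x)^2 < 1" using assms cmod_sq[of x]
    by (metis norm_ge_zero power_strict_mono one_power2 zero_less_numeral)
  have "x \<noteq> 1" using assms by auto
  then have d: "(1 - Re x)^2 + (Im x)^2 > 0"
    by (smt (verit) complex_eq_iff one_complex.simps sum_power2_gt_zero_iff)
  show ?thesis unfolding Re_divide using d x2
    by (simp add: field_simps power2_eq_square)
qed

definition nt :: "complex \<Rightarrow> complex \<Rightarrow> complex \<Rightarrow> complex \<Rightarrow> complex" where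
  "nt a1 a2 z0 w = - (a1 + a2 + z0) + 2 * (a1 * a2 + (a1 + a2) * z0) * w - 3 * (a1 * a2 * z0) * w^2"

definition kf :: "complex \<Rightarrow> complex \<Rightarrow> complex \<Rightarrow> complex \<Rightarrow> complex" where
  "kf a1 a2 z0 w = - cnj z0 * (1 - z0 * w) * nt a1 a2 z0 w / ((1 - a1 * w) * (1 - a2 * w))"

lemma cnj_unit: "cmod z = 1 \<Longrightarrow> cnj z = 1 / z"
  by (metis complex_div_cnj div_by_1 mult_1 norm_one of_real_1 power_one)

lemma cmod_sq_unit:
  assumes "cmod z = 1" "cmod z0 = 1"
  shows "complex_of_real ((cmod (z - z0))^2) = (z - z0) * (1/z - 1/z0)"
proof -
  have "complex_of_real ((cmod (z - z0))^2) = (z - z0) * cnj (z - z0)"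
    by (rule complex_norm_square)
  also have "\<dots> = (z - z0) * (1/z - 1/z0)" using assms by (simp add: cnj_unit)
  finally show ?thesis .
qed

lemma kf_identity:
  assumes z0: "cmod z0 = 1" and z: "z \<noteq> 0" and "z \<noteq> a1" "z \<noteq> a2" "z \<noteq> z0"
  shows "kf a1 a2 z0 (1/z) = (z - z0) * (1/z - 1/z0) * (3 - z/(z-a1) - z/(z-a2) - z/(z-z0))"
proof -
  have z00: "z0 \<noteq> 0" using z0 by auto
  have d1: "z - a1 \<noteq> 0" "z - a2 \<noteq> 0" "z - z0 \<noteq> 0" using assms by auto
  have e1: "1 - a1 * (1/z) = (z - a1) / z" "1 - a2 * (1/z) = (z - a2) / z" "1 - z0 * (1/z) = (z - z0)/z"
    using z by (simp_all add: field_simps)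
  define u1 where "u1 = z - a1"
  define u2 where "u2 = z - a2"
  define u0 where "u0 = z - z0"
  have a: "a1 = z - u1" "a2 = z - u2" "z0 = z - u0" by (simp_all add: u1_def u2_def u0_def)
  have nz: "u1 \<noteq> 0" "u2 \<noteq> 0" "u0 \<noteq> 0" "z - u0 \<noteq> 0" using d1 z00 by (simp_all add: u1_def u2_def u0_def)
  show ?thesis
    unfolding kf_def nt_def cnj_unit[OF z0] e1 u1_def[symmetric] u2_def[symmetric] u0_def[symmetric]
    unfolding a using z nz
    by (simp add: field_simps) (simp add: algebra_simps power2_eq_square)
qed

lemma K_boundary:
  assumes z: "cmod z = 1" and z0: "cmod z0 = 1" and a1: "cmod a1 < 1" and a2: "cmod a2 < 1"
  shows "Re (kf a1 a2 z0 (cnj z)) = (cmod (z - z0))^2 * (3 - (PK a1 z + PK a2 z)) / 2"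
proof (cases "z = z0")
  case True
  have "z0 \<noteq> 0" using z0 by auto
  then have "kf a1 a2 z0 (cnj z) = 0" unfolding True kf_def cnj_unit[OF z0] by simp
  then show ?thesis using True by simp
next
  case False
  have zn: "z \<noteq> 0" using z by auto
  have za1: "z \<noteq> a1" using z a1 by auto
  have za2: "z \<noteq> a2" using z a2 by auto
  have "kf a1 a2 z0 (cnj z) = complex_of_real ((cmod (z - z0))^2) * (3 - z/(z-a1) - z/(z-a2) - z/(z-z0))"
    unfolding cnj_unit[OF z] cmod_sq_unit[OF z z0] using kf_identity[OF z0 zn za1 za2 False] .
  then have "Re (kf a1 a2 z0 (cnj z)) = (cmod (z - z0))^2 * (3 - Re (z/(z-a1)) - Re (z/(z-a2)) - Re (z/(z-z0)))"
    by simp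
  moreover have "PK z0 z = 0" unfolding PK_def using z0 by simp
  ultimately show ?thesis using re_frac[OF z za1] re_frac[OF z za2] re_frac[OF z False]
    by (simp add: field_simps)
qed

lemma denom_nz:
  assumes "cmod a < 1" "cmod w \<le> 1"
  shows "1 - a * w \<noteq> 0"
proof
  assume "1 - a * w = 0"
  then have "cmod (a * w) = 1" by (metis eq_iff_diff_eq_0 norm_one)
  moreover have "cmod a * cmod w \<le> cmod a * 1" using assms by (intro mult_left_mono) auto
  then have "cmod (a * w) < 1" using assms by (simp add: norm_mult)
  ultimately show False by simp
qed

lemma kf_holo:
  assumes "cmod a1 < 1" "cmod a2 < 1"
  shows "(\<lambda>w. kf a1 a2 z0 w) holomorphic_on cball 0 1"
  unfolding kf_def nt_def
  by (intro holomorphic_intros) (use assms denom_nz in auto)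

lemma norm_ratio_le:
  assumes "Re k \<ge> 0"
  shows "cmod (1 - k) \<le> cmod (1 + k)"
proof (rule power2_le_imp_le)
  show "(cmod (1 - k))^2 \<le> (cmod (1 + k))^2" unfolding cmod_sq using assms
    by (simp add: power2_eq_square algebra_simps)
qed simp

lemma no_zero_ball:
  assumes a1: "cmod a1 < 1" and a2: "cmod a2 < 1" and z0: "cmod z0 = 1"
    and hyp: "\<And>z. cmod z = 1 \<Longrightarrow> PK a1 z + PK a2 z \<le> 3"
    and w1: "cmod w1 < 1"
  shows "nt a1 a2 z0 w1 \<noteq> 0"
proof
  assume nt0: "nt a1 a2 z0 w1 = 0"
  let ?k = "\<lambda>w. kf a1 a2 z0 w"
  have holo: "?k holomorphic_on cball 0 1" using kf_holo[OF a1 a2] .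
  have bd: "Re (?k w) \<ge> 0" if "w \<in> sphere 0 1" for w
  proof -
    have cw: "cmod (cnj w) = 1" using that by simp
    have "Re (?k (cnj (cnj w))) = (cmod (cnj w - z0))^2 * (3 - (PK a1 (cnj w) + PK a2 (cnj w))) / 2"
      using K_boundary[OF cw z0 a1 a2] .
    moreover have "PK a1 (cnj w) + PK a2 (cnj w) \<le> 3" using hyp[OF cw] .
    moreover have "0 \<le> (cmod (cnj w - z0))^2 * (3 - (PK a1 (cnj w) + PK a2 (cnj w)))"
      using calculation(2) by (intro mult_nonneg_nonneg) auto
    ultimately show ?thesis by (simp only: complex_cnj_cnj)
  qed
  have pos: "Re (?k w) \<ge> 0" if "w \<in> cball 0 1" for w
  proof -
    have "norm (exp (- ?k w)) \<le> 1"
    proof (rule maximum_modulus_frontier[where S = "cball 0 1" and f = "\<lambda>w. exp (- ?k w)"])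
      show "(\<lambda>w. exp (- ?k w)) holomorphic_on interior (cball 0 1)"
        using holo by (intro holomorphic_intros) (auto intro: holomorphic_on_subset)
      show "continuous_on (closure (cball 0 1)) (\<lambda>w. exp (- ?k w))"
        using holomorphic_on_imp_continuous_on[OF holo] by (auto intro!: continuous_intros)
      show "bounded (cball (0::complex) 1)" by simp
      show "norm (exp (- ?k z)) \<le> 1" if "z \<in> frontier (cball 0 1)" for z
        using bd[of z] that by (simp add: norm_exp_eq_Re)
      show "w \<in> cball 0 1" using that .
    qed
    then show ?thesis by (simp add: norm_exp_eq_Re)
  qed
  have k0: "?k w1 = 0" unfolding kf_def nt0 by simp
  define g where "g = (\<lambda>w. (1 - ?k w) / (1 + ?k w))"
  have nz: "1 + ?k w \<noteq> 0" if "w \<in> cball 0 1" for w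
  proof
    assume "1 + ?k w = 0"
    then have "Re (1 + ?k w) = 0" by simp
    then show False using pos[OF that] by simp
  qed
  have gholo: "g holomorphic_on ball 0 1"
    unfolding g_def using nz holo by (intro holomorphic_intros) (auto intro: holomorphic_on_subset)
  have gw1: "g w1 = 1" unfolding g_def k0 by simp
  have "g constant_on ball 0 1"
  proof (rule maximum_modulus_principle[OF gholo _ _ _ _ _])
    show "open (ball (0::complex) 1)" "connected (ball (0::complex) 1)" "open (ball (0::complex) 1)" by auto
    show "ball 0 1 \<subseteq> ball (0::complex) 1" by simp
    show "w1 \<in> ball 0 1" using w1 by simp
    show "norm (g z) \<le> norm (g w1)" if "z \<in> ball 0 1" for z
    proof -
      have "cmod (1 - ?k z) \<le> cmod (1 + ?k z)" using pos[of z] that by (intro norm_ratio_le) auto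
      then have "norm (g z) \<le> 1" unfolding g_def using nz[of z] that by (simp add: norm_divide divide_le_eq_1)
      then show ?thesis using gw1 by simp
    qed
  qed
  then obtain c where c: "\<And>w. w \<in> ball 0 1 \<Longrightarrow> g w = c" unfolding constant_on_def by blast
  have kz: "?k w = 0" if "cmod w < 1" for w
  proof -
    have "g w = 1" using c[of w] c[of w1] gw1 that w1 by simp
    then have "1 - ?k w = 1 + ?k w" unfolding g_def using nz[of w] that by (simp add: divide_eq_1_iff)
    then show ?thesis by simp
  qed
  have ntz: "nt a1 a2 z0 w = 0" if "cmod w < 1" for w
  proof -
    have "cmod (z0 * w) < 1" using that z0 by (simp add: norm_mult)
    then have "1 - z0 * w \<noteq> 0" by auto
    moreover have "(1 - a1 * w) * (1 - a2 * w) \<noteq> 0" using denom_nz a1 a2 that by simp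
    moreover have "cnj z0 \<noteq> 0" using z0 by auto
    ultimately show ?thesis using kz[OF that] unfolding kf_def by simp
  qed
  have e0: "nt a1 a2 z0 0 = 0" and e1: "nt a1 a2 z0 (1/2) = 0" and e2: "nt a1 a2 z0 (-1/2) = 0"
    by (rule ntz; simp)+
  have z0n: "z0 \<noteq> 0" using z0 by auto
  define X where "X = a1 + a2 + z0"
  define Y where "Y = a1 * a2 + (a1 + a2) * z0"
  define Z where "Z = a1 * a2 * z0"
  have ntw: "nt a1 a2 z0 w = - X + 2 * Y * w - 3 * Z * w^2" for w
    unfolding nt_def X_def Y_def Z_def by simp
  have X0: "X = 0" using e0 ntw[of 0] by simp
  have eq1: "Y - 3 * Z / 4 = 0" using e1 ntw[of "1/2"] X0 by (simp add: power2_eq_square field_simps)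
  have eq2: "- Y - 3 * Z / 4 = 0" using e2 ntw[of "-1/2"] X0 by (simp add: power2_eq_square field_simps)
  have Z0: "Z = 0" using eq1 eq2 by (simp add: field_simps)
  have Y0: "Y = 0" using eq1 Z0 by simp
  have p0: "a1 * a2 = 0" using Z0 z0n unfolding Z_def by simp
  have "(a1 + a2) * z0 = 0" using Y0 p0 unfolding Y_def by (metis add.left_neutral)
  then have "a1 + a2 = 0" using z0n by simp
  then have "z0 = 0" using X0 unfolding X_def by (simp add: algebra_simps)
  then show False using z0n by simp
qed

lemma nt_at_z0:
  assumes "z0 \<noteq> 0"
  shows "nt a1 a2 z0 (1/z0) = - (z0 - a1) * (z0 - a2) / z0"
  using assms unfolding nt_def by (simp add: field_simps power2_eq_square)

lemma S_at_z0:
  assumes z0: "cmod z0 = 1" and a1: "cmod a1 < 1" and a2: "cmod a2 < 1"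
  shows "PK a1 z0 + PK a2 z0 = Re ((2 * (- (a1 + a2 + z0)) + 2 * (a1 * a2 + (a1 + a2) * z0) * (1/z0)) / nt a1 a2 z0 (1/z0))"
proof -
  have z0n: "z0 \<noteq> 0" using z0 by auto
  have d1: "z0 - a1 \<noteq> 0" "z0 - a2 \<noteq> 0" using z0 a1 a2 by auto
  have "(2 * (- (a1 + a2 + z0)) + 2 * (a1 * a2 + (a1 + a2) * z0) * (1/z0)) / nt a1 a2 z0 (1/z0)
      = (z0 + a1) / (z0 - a1) + (z0 + a2) / (z0 - a2)"
  proof -
    define u1 where "u1 = z0 - a1"
    define u2 where "u2 = z0 - a2"
    have a: "a1 = z0 - u1" "a2 = z0 - u2" by (simp_all add: u1_def u2_def)
    have nz: "u1 \<noteq> 0" "u2 \<noteq> 0" using d1 by (simp_all add: u1_def u2_def)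
    show ?thesis unfolding nt_at_z0[OF z0n] u1_def[symmetric] u2_def[symmetric] unfolding a
      using z0n nz by (simp add: field_simps)
  qed
  then show ?thesis using re_herg[of z0 a1] re_herg[of z0 a2] z0 d1 by simp
qed

lemma gamma_factor:
  assumes z0: "cmod z0 = 1" and a1: "cmod a1 < 1" and a2: "cmod a2 < 1"
    and A0: "nt a1 a2 z0 0 \<noteq> 0"
  obtains g1 g2 where "\<And>w. nt a1 a2 z0 w = nt a1 a2 z0 0 * (1 - g1 * w) * (1 - g2 * w)"
    and "1 - g1 * cnj z0 \<noteq> 0" "1 - g2 * cnj z0 \<noteq> 0"
    and "PK a1 z0 + PK a2 z0 = 2 + Re ((g1 * cnj z0) / (1 - g1 * cnj z0)) + Re ((g2 * cnj z0) / (1 - g2 * cnj z0))"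
proof -
  define A where "A = - (a1 + a2 + z0)"
  define Bc where "Bc = 2 * (a1 * a2 + (a1 + a2) * z0)"
  define D where "D = - 3 * (a1 * a2 * z0)"
  have ntw: "nt a1 a2 z0 w = A + Bc * w + D * w^2" for w unfolding nt_def A_def Bc_def D_def by simp
  have An: "A \<noteq> 0" using A0 ntw[of 0] by simp
  define r where "r = csqrt (Bc^2 - 4 * A * D)"
  have r2: "r^2 = Bc^2 - 4 * A * D" unfolding r_def by simp
  define g1 where "g1 = (- Bc + r) / (2 * A)"
  define g2 where "g2 = (- Bc - r) / (2 * A)"
  have s: "A * (g1 + g2) = - Bc" unfolding g1_def g2_def using An by (simp add: field_simps)
  have gg: "g1 * g2 = ((-Bc + r) * (-Bc - r)) / (4 * A * A)" unfolding g1_def g2_def using An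
    by (simp add: field_simps)
  have "(-Bc + r) * (-Bc - r) = 4 * A * D" using r2 by (simp add: power2_eq_square algebra_simps)
  then have p: "A * (g1 * g2) = D" unfolding gg using An by (simp add: field_simps)
  have fac: "nt a1 a2 z0 w = A * (1 - g1 * w) * (1 - g2 * w)" for w
  proof -
    have "A * (1 - g1 * w) * (1 - g2 * w) = A - A * (g1 + g2) * w + A * (g1 * g2) * w^2"
      by (simp add: algebra_simps power2_eq_square)
    also have "\<dots> = A + Bc * w + D * w^2" using s p by (simp add: algebra_simps)
    finally show ?thesis using ntw by simp
  qed
  have z0n: "z0 \<noteq> 0" using z0 by auto
  have cz: "cnj z0 = 1 / z0" using cnj_unit[OF z0] .
  have d1: "z0 - a1 \<noteq> 0" "z0 - a2 \<noteq> 0" using z0 a1 a2 by auto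
  have ntz: "nt a1 a2 z0 (cnj z0) \<noteq> 0" unfolding cz nt_at_z0[OF z0n] using d1 z0n by simp
  have n1: "1 - g1 * cnj z0 \<noteq> 0" and n2: "1 - g2 * cnj z0 \<noteq> 0" using ntz fac[of "cnj z0"] by auto
  have "(2 * A + Bc * cnj z0) / nt a1 a2 z0 (cnj z0) = 2 + (g1 * cnj z0) / (1 - g1 * cnj z0) + (g2 * cnj z0) / (1 - g2 * cnj z0)"
  proof -
    define e1 where "e1 = 1 - g1 * cnj z0"
    define e2 where "e2 = 1 - g2 * cnj z0"
    have x: "g1 * cnj z0 = 1 - e1" "g2 * cnj z0 = 1 - e2" by (simp_all add: e1_def e2_def)
    have bB: "Bc = - (A * (g1 + g2))" using s by (metis minus_minus)
    have "Bc * cnj z0 = - A * (g1 * cnj z0 + g2 * cnj z0)" unfolding bB by (simp add: algebra_simps)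
    then have bc: "Bc * cnj z0 = - A * ((1 - e1) + (1 - e2))" unfolding x .
    have en: "e1 \<noteq> 0" "e2 \<noteq> 0" using n1 n2 by (simp_all add: e1_def e2_def)
    show ?thesis unfolding fac bc e1_def[symmetric] e2_def[symmetric] x using en An
      by (simp add: field_simps)
  qed
  moreover have "PK a1 z0 + PK a2 z0 = Re ((2 * A + Bc * cnj z0) / nt a1 a2 z0 (cnj z0))"
    unfolding A_def Bc_def cz using S_at_z0[OF z0 a1 a2] .
  ultimately have "PK a1 z0 + PK a2 z0 = 2 + Re ((g1 * cnj z0) / (1 - g1 * cnj z0)) + Re ((g2 * cnj z0) / (1 - g2 * cnj z0))"
    by simp
  moreover have "A = nt a1 a2 z0 0" using ntw[of 0] by simp
  ultimately show ?thesis using that fac n1 n2 by metis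
qed

lemma key_weak:
  assumes a1: "cmod a1 < 1" and a2: "cmod a2 < 1" and z0: "cmod z0 = 1"
    and hyp: "\<And>z. cmod z = 1 \<Longrightarrow> PK a1 z + PK a2 z \<le> 3"
  shows "PK a1 z0 + PK a2 z0 \<ge> 1"
proof -
  have nz: "nt a1 a2 z0 w \<noteq> 0" if "cmod w < 1" for w using no_zero_ball[OF a1 a2 z0 hyp that] by blast
  have A0: "nt a1 a2 z0 0 \<noteq> 0" using nz[of 0] by simp
  obtain g1 g2 where fac: "\<And>w. nt a1 a2 z0 w = nt a1 a2 z0 0 * (1 - g1 * w) * (1 - g2 * w)"
    and n1: "1 - g1 * cnj z0 \<noteq> 0" and n2: "1 - g2 * cnj z0 \<noteq> 0"
    and S: "PK a1 z0 + PK a2 z0 = 2 + Re ((g1 * cnj z0) / (1 - g1 * cnj z0)) + Re ((g2 * cnj z0) / (1 - g2 * cnj z0))"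
    using gamma_factor[OF z0 a1 a2 A0] by blast
  have gb: "cmod g \<le> 1" if "\<And>w. nt a1 a2 z0 w = nt a1 a2 z0 0 * (1 - g * w) * h w" for g h
  proof (rule ccontr)
    assume "\<not> cmod g \<le> 1"
    then have g1: "cmod g > 1" by simp
    then have gn: "g \<noteq> 0" by auto
    have "cmod (1/g) < 1" using g1 by (simp add: norm_divide divide_less_eq)
    moreover have "nt a1 a2 z0 (1/g) = 0" using that[of "1/g"] gn by simp
    ultimately show False using nz by blast
  qed
  have b1: "cmod g1 \<le> 1" by (rule gb[of g1 "\<lambda>w. 1 - g2 * w"]) (rule fac)
  have b2: "cmod g2 \<le> 1" by (rule gb[of g2 "\<lambda>w. 1 - g1 * w"]) (metis fac mult.commute mult.assoc)
  have "Re ((g1 * cnj z0) / (1 - g1 * cnj z0)) \<ge> -1/2"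
    using b1 n1 z0 by (intro re_xfrac) (auto simp: norm_mult)
  moreover have "Re ((g2 * cnj z0) / (1 - g2 * cnj z0)) \<ge> -1/2"
    using b2 n2 z0 by (intro re_xfrac) (auto simp: norm_mult)
  ultimately show ?thesis using S by linarith
qed

lemma key_strict:
  assumes a1: "cmod a1 < 1" and a2: "cmod a2 < 1" and z0: "cmod z0 = 1"
    and hyp: "\<And>z. cmod z = 1 \<Longrightarrow> PK a1 z + PK a2 z < 3"
  shows "PK a1 z0 + PK a2 z0 > 1"
proof -
  have hyp': "PK a1 z + PK a2 z \<le> 3" if "cmod z = 1" for z using hyp[OF that] by simp
  have z0n: "z0 \<noteq> 0" using z0 by auto
  have nz: "nt a1 a2 z0 w \<noteq> 0" if "cmod w \<le> 1" for w
  proof (cases "cmod w < 1")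
    case True then show ?thesis using no_zero_ball[OF a1 a2 z0 hyp'] by blast
  next
    case False
    then have w1: "cmod w = 1" using that by simp
    show ?thesis
    proof (cases "cnj w = z0")
      case True
      then have "w = 1 / z0" using cnj_unit[OF z0] by (metis complex_cnj_cnj)
      then show ?thesis using nt_at_z0[OF z0n] z0 a1 a2 by auto
    next
      case False
      have cw: "cmod (cnj w) = 1" using w1 by simp
      have "Re (kf a1 a2 z0 (cnj (cnj w))) = (cmod (cnj w - z0))^2 * (3 - (PK a1 (cnj w) + PK a2 (cnj w))) / 2"
        using K_boundary[OF cw z0 a1 a2] .
      moreover have "(cmod (cnj w - z0))^2 * (3 - (PK a1 (cnj w) + PK a2 (cnj w))) > 0"
        using hyp[OF cw] False by (intro mult_pos_pos) auto
      ultimately have "kf a1 a2 z0 w \<noteq> 0" by auto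
      then show ?thesis unfolding kf_def by auto
    qed
  qed
  have A0: "nt a1 a2 z0 0 \<noteq> 0" using nz[of 0] by simp
  obtain g1 g2 where fac: "\<And>w. nt a1 a2 z0 w = nt a1 a2 z0 0 * (1 - g1 * w) * (1 - g2 * w)"
    and n1: "1 - g1 * cnj z0 \<noteq> 0" and n2: "1 - g2 * cnj z0 \<noteq> 0"
    and S: "PK a1 z0 + PK a2 z0 = 2 + Re ((g1 * cnj z0) / (1 - g1 * cnj z0)) + Re ((g2 * cnj z0) / (1 - g2 * cnj z0))"
    using gamma_factor[OF z0 a1 a2 A0] by blast
  have gb: "cmod g < 1" if "\<And>w. nt a1 a2 z0 w = nt a1 a2 z0 0 * (1 - g * w) * h w" for g h
  proof (rule ccontr)
    assume "\<not> cmod g < 1"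
    then have g1: "cmod g \<ge> 1" by simp
    then have gn: "g \<noteq> 0" by auto
    have "cmod (1/g) \<le> 1" using g1 by (simp add: norm_divide divide_le_eq)
    moreover have "nt a1 a2 z0 (1/g) = 0" using that[of "1/g"] gn by simp
    ultimately show False using nz by blast
  qed
  have b1: "cmod g1 < 1" by (rule gb[of g1 "\<lambda>w. 1 - g2 * w"]) (rule fac)
  have b2: "cmod g2 < 1" by (rule gb[of g2 "\<lambda>w. 1 - g1 * w"]) (metis fac mult.commute mult.assoc)
  have "Re ((g1 * cnj z0) / (1 - g1 * cnj z0)) > -1/2"
    using b1 z0 by (intro re_xfrac_strict) (auto simp: norm_mult)
  moreover have "Re ((g2 * cnj z0) / (1 - g2 * cnj z0)) > -1/2"
    using b2 z0 by (intro re_xfrac_strict) (auto simp: norm_mult)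
  ultimately show ?thesis using S by linarith
qed



lemma bf_deriv:
  assumes "1 - cnj a * z \<noteq> 0"
  shows "((\<lambda>z. (z - a) / (1 - cnj a * z)) has_field_derivative (1 - cnj a * a) / (1 - cnj a * z)^2) (at z)"
proof -
  have "((\<lambda>z. (z - a) / (1 - cnj a * z)) has_field_derivative
      ((1 - 0) * (1 - cnj a * z) - (z - a) * (0 - cnj a * 1)) / ((1 - cnj a * z) * (1 - cnj a * z))) (at z)"
    by (rule DERIV_divide[OF DERIV_diff[OF DERIV_ident DERIV_const] DERIV_diff[OF DERIV_const DERIV_cmult[OF DERIV_ident]] assms])
  moreover have "((1 - 0) * (1 - cnj a * z) - (z - a) * (0 - cnj a * 1)) / ((1 - cnj a * z) * (1 - cnj a * z))
     = (1 - cnj a * a) / (1 - cnj a * z)^2"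
    by (simp add: power2_eq_square algebra_simps)
  ultimately show ?thesis by simp
qed

lemma unit_id:
  assumes "cmod z = 1"
  shows "1 - cnj a * z = z * cnj (z - a)"
  using cnj_unit[OF assms] assms by (auto simp: field_simps)

lemma bf_unit:
  assumes z: "cmod z = 1" and a: "cmod a < 1"
  shows "cmod ((z - a) / (1 - cnj a * z)) = 1"
    and "(1 - cnj a * a) / (1 - cnj a * z)^2 = (z - a) / (1 - cnj a * z) * complex_of_real (PK a z) / z"
proof -
  have za: "z - a \<noteq> 0" using z a by auto
  have zn: "z \<noteq> 0" using z by auto
  have cza: "cnj (z - a) \<noteq> 0" using za by simp
  show "cmod ((z - a) / (1 - cnj a * z)) = 1"
    unfolding unit_id[OF z] using za z by (simp add: norm_divide norm_mult flip: complex_cnj_diff)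
  have pk: "complex_of_real (PK a z) = (1 - a * cnj a) / ((z - a) * cnj (z - a))"
    unfolding PK_def of_real_divide of_real_diff of_real_1 complex_norm_square by (rule refl)
  show "(1 - cnj a * a) / (1 - cnj a * z)^2 = (z - a) / (1 - cnj a * z) * complex_of_real (PK a z) / z"
  proof -
    define u where "u = z - a"
    define v where "v = cnj (z - a)"
    have "u \<noteq> 0" "v \<noteq> 0" using za cza by (simp_all add: u_def v_def)
    then show ?thesis unfolding unit_id[OF z] pk u_def[symmetric] v_def[symmetric] using zn
      by (simp add: field_simps power2_eq_square)
  qed
qed

lemma PK_nonneg: "cmod a < 1 \<Longrightarrow> PK a z \<ge> 0"
  unfolding PK_def by (simp add: power_le_one)

lemma bl_deriv:
  assumes z: "cmod z = 1" and a1: "cmod a1 < 1" and a2: "cmod a2 < 1"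
  shows "cmod (deriv (blaschke alpha [a1, a2]) z) = cmod alpha * (PK a1 z + PK a2 z)"
proof -
  define b1 where "b1 = (\<lambda>z. (z - a1) / (1 - cnj a1 * z))"
  define b2 where "b2 = (\<lambda>z. (z - a2) / (1 - cnj a2 * z))"
  have B: "blaschke alpha [a1, a2] = (\<lambda>z. alpha * (b1 z * b2 z))"
    by (rule ext) (simp add: blaschke_def b1_def b2_def)
  have n1: "1 - cnj a1 * z \<noteq> 0" using denom_nz[of "cnj a1" z] a1 z by simp
  have n2: "1 - cnj a2 * z \<noteq> 0" using denom_nz[of "cnj a2" z] a2 z by simp
  define d1 where "d1 = (1 - cnj a1 * a1) / (1 - cnj a1 * z)^2"
  define d2 where "d2 = (1 - cnj a2 * a2) / (1 - cnj a2 * z)^2"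
  have D1: "(b1 has_field_derivative d1) (at z)" unfolding b1_def d1_def by (rule bf_deriv[OF n1])
  have D2: "(b2 has_field_derivative d2) (at z)" unfolding b2_def d2_def by (rule bf_deriv[OF n2])
  have "((\<lambda>z. alpha * (b1 z * b2 z)) has_field_derivative alpha * (d1 * b2 z + b1 z * d2)) (at z)"
    by (rule derivative_eq_intros D1 D2 refl | simp)+
  then have dv: "deriv (blaschke alpha [a1, a2]) z = alpha * (d1 * b2 z + b1 z * d2)"
    unfolding B by (rule DERIV_imp_deriv)
  have e1: "d1 = b1 z * complex_of_real (PK a1 z) / z" unfolding d1_def b1_def using bf_unit(2)[OF z a1] .
  have e2: "d2 = b2 z * complex_of_real (PK a2 z) / z" unfolding d2_def b2_def using bf_unit(2)[OF z a2] .
  have "alpha * (d1 * b2 z + b1 z * d2) = alpha * b1 z * b2 z * complex_of_real (PK a1 z + PK a2 z) / z"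
    unfolding e1 e2 by (simp add: algebra_simps add_divide_distrib)
  moreover have "cmod (b1 z) = 1" unfolding b1_def using bf_unit(1)[OF z a1] .
  moreover have "cmod (b2 z) = 1" unfolding b2_def using bf_unit(1)[OF z a2] .
  moreover have "PK a1 z + PK a2 z \<ge> 0" using PK_nonneg[OF a1] PK_nonneg[OF a2] by (simp add: add_nonneg_nonneg)
  ultimately show ?thesis unfolding dv using z by (simp add: norm_mult norm_divide flip: of_real_add)
qed

theorem corollary3:
  fixes B :: "complex \<Rightarrow> complex"
  assumes "is_blaschke 2 B"
  shows "(Mder B \<le> 3 \<longrightarrow> mder B \<ge> 1) \<and> (Mder B < 3 \<longrightarrow> mder B > 1)"
proof -
  obtain alpha as where al: "cmod alpha = 1" and len: "length as = 2"
    and as: "\<forall>a\<in>set as. cmod a < 1" and Bd: "B = blaschke alpha as"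
    using assms unfolding is_blaschke_def by blast
  obtain a1 a2 where as12: "as = [a1, a2]"
    using len by (metis One_nat_def Suc_1 length_0_conv length_Suc_conv)
  have a1: "cmod a1 < 1" and a2: "cmod a2 < 1" using as as12 by auto
  define S where "S = (\<lambda>z. PK a1 z + PK a2 z)"
  have dS: "cmod (deriv B z) = S z" if "z \<in> sphere 0 1" for z
    using bl_deriv[of z a1 a2 alpha] that a1 a2 al unfolding Bd as12 S_def by simp
  have M: "Mder B = (SUP z\<in>sphere 0 1. S z)" unfolding Mder_def using dS by (intro SUP_cong) auto
  have m: "mder B = (INF z\<in>sphere 0 1. S z)" unfolding mder_def using dS by (intro INF_cong) auto
  have cont: "continuous_on (sphere 0 1) S"
  proof -
    have "cmod (z - a) \<noteq> 0" if "z \<in> sphere 0 1" "cmod a < 1" for z a using that by auto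
    then show ?thesis unfolding S_def PK_def using a1 a2 by (intro continuous_intros) auto
  qed
  have bdd: "bdd_above (S ` sphere 0 1)"
    by (intro bounded_imp_bdd_above compact_imp_bounded compact_continuous_image cont) simp
  have ne: "sphere (0::complex) 1 \<noteq> {}" by (metis empty_iff mem_sphere_0 norm_one)
  have P1: "mder B \<ge> 1" if h: "Mder B \<le> 3"
  proof -
    have le3: "S z \<le> 3" if "cmod z = 1" for z
      using cSUP_upper[OF _ bdd, of z] that h M by simp
    have "S z0 \<ge> 1" if "z0 \<in> sphere 0 1" for z0
      using key_weak[OF a1 a2 _ le3[unfolded S_def]] that unfolding S_def by simp
    then show ?thesis unfolding m by (intro cINF_greatest ne) auto
  qed
  have P2: "mder B > 1" if h: "Mder B < 3"
  proof -
    have lt3: "S z < 3" if "cmod z = 1" for z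
      using cSUP_upper[OF _ bdd, of z] that h M by simp
    have gt: "S z0 > 1" if "z0 \<in> sphere 0 1" for z0
      using key_strict[OF a1 a2 _ lt3[unfolded S_def]] that unfolding S_def by simp
    obtain xm where xm: "xm \<in> sphere 0 1" and xmin: "\<And>y. y \<in> sphere 0 1 \<Longrightarrow> S xm \<le> S y"
      using continuous_attains_inf[OF _ ne cont] by auto
    have "S xm \<le> mder B" unfolding m by (intro cINF_greatest ne xmin)
    then show ?thesis using gt[OF xm] by simp
  qed
  show ?thesis using P1 P2 by blast
qed

end
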